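(* Let $0\le m<a<M\le1$, $k\ge0$ and $b,c>1$, and let $\omega(t)=-kt-(b-1)\ln t-(c-1)\ln(1-t)$ for $0<t<1$. (i) If $\omega'(a)>0$, then $$\int_a^M e^{-\omega(t)}\,dt\le\frac{e^{ka}a^{b-1}(1-a)^{c-1}}{\omega'(a)}$$ and $$\int_a^M e^{-\omega(t)}\,dt\ge\frac{e^{ka}a^{b-1}(1-a)^{c-1}}{\omega'(M)}\left(1-\exp\{-(M-a)\omega'(a)\}\right).$$ (ii) If $\omega'(a)<0$, then $$\int_m^a e^{-\omega(t)}\,dt\le\frac{e^{ka}a^{b-1}(1-a)^{c-1}}{-\omega'(a)}$$ and $$\int_m^a e^{-\omega(t)}\,dt\ge\frac{e^{ka}a^{b-1}(1-a)^{c-1}}{-\omega'(m)}\left(1-\exp\{(a-m)\omega'(a)\}\right).$$ *)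

theory Defs
  imports "HOL-Analysis.Analysis"
begin

definition omega :: "real \<Rightarrow> real \<Rightarrow> real \<Rightarrow> real \<Rightarrow> real" where
  "omega k b c t = - k * t - (b - 1) * ln t - (c - 1) * ln (1 - t)"

end

theory Submission
  imports Defs
begin

definition wd :: "real \<Rightarrow> real \<Rightarrow> real \<Rightarrow> real \<Rightarrow> real" where
  "wd k b c x = - k - (b - 1) / x + (c - 1) / (1 - x)"

lemma om_deriv:
  assumes "0 < x" "x < 1"
  shows "(omega k b c has_real_derivative wd k b c x) (at x)"
proof -
  have e: "wd k b c x = - (k * 1) - (b - 1) * (1 / x) - (c - 1) * (inverse (1 - x) * (0 - 1))"
    unfolding wd_def by (simp add: field_simps)
  have "((\<lambda>t. - (k * t) - (b - 1) * ln t - (c - 1) * ln (1 - t)) has_real_derivative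
     (- (k * 1) - (b - 1) * (1 / x) - (c - 1) * (inverse (1 - x) * (0 - 1)))) (at x)"
  proof -
    have h1: "(ln has_real_derivative 1 / x) (at x)" using assms DERIV_ln_divide by blast
    have h2: "((\<lambda>t. ln (1 - t)) has_real_derivative inverse (1 - x) * (0 - 1)) (at x)"
      using assms by (auto intro!: derivative_eq_intros simp: field_simps)
    have h3: "((\<lambda>t. k * t) has_real_derivative k * 1) (at x)" by (auto intro!: derivative_eq_intros)
    show ?thesis by (intro DERIV_diff DERIV_minus DERIV_cmult h1 h2 h3)
  qed
  then show ?thesis unfolding omega_def[abs_def] e by simp
qed

lemma om_deriv_eq: "0 < x \<Longrightarrow> x < 1 \<Longrightarrow> deriv (omega k b c) x = wd k b c x"
  using om_deriv DERIV_imp_deriv by blast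

lemma wd_mono:
  assumes "0 < x" "x \<le> y" "y < 1" "b > 1" "c > 1"
  shows "wd k b c x \<le> wd k b c y"
proof -
  have "(b - 1) / y \<le> (b - 1) / x" using assms by (intro divide_left_mono) auto
  moreover have "(c - 1) / (1 - x) \<le> (c - 1) / (1 - y)" using assms by (intro divide_left_mono) auto
  ultimately show ?thesis unfolding wd_def by linarith
qed

lemma om_mvt:
  assumes "0 < s" "s < t" "t < 1"
  shows "\<exists>z. s < z \<and> z < t \<and> omega k b c t - omega k b c s = (t - s) * wd k b c z"
  using assms by (intro MVT2) (auto intro: om_deriv)

lemma om_bounds:
  assumes "0 < s" "s \<le> t" "t < 1" "b > 1" "c > 1"
  shows "omega k b c t - omega k b c s \<le> wd k b c t * (t - s)"
    and "omega k b c t - omega k b c s \<ge> wd k b c s * (t - s)"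
proof -
  have "omega k b c t - omega k b c s \<le> wd k b c t * (t - s) \<and>
        omega k b c t - omega k b c s \<ge> wd k b c s * (t - s)"
  proof (cases "s = t")
    case False
    then have "s < t" using assms by auto
    then obtain z where z: "s < z" "z < t" "omega k b c t - omega k b c s = (t - s) * wd k b c z"
      using om_mvt assms by blast
    have "wd k b c z \<le> wd k b c t" "wd k b c s \<le> wd k b c z"
      using z assms by (auto intro!: wd_mono)
    then show ?thesis using z \<open>s < t\<close> by (auto simp: mult.commute intro: mult_right_mono)
  qed simp
  then show "omega k b c t - omega k b c s \<le> wd k b c t * (t - s)"
    and "omega k b c t - omega k b c s \<ge> wd k b c s * (t - s)" by auto
qed

lemma om_tangent:
  assumes "0 < x" "x < 1" "0 < t" "t < 1" "b > 1" "c > 1"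
  shows "omega k b c t \<ge> omega k b c x + wd k b c x * (t - x)"
proof (cases "x \<le> t")
  case True then show ?thesis using om_bounds(2)[of x t b c k] assms by auto
next
  case False
  then have "omega k b c x - omega k b c t \<le> wd k b c x * (x - t)"
    using om_bounds(1)[of t x b c k] assms by auto
  then show ?thesis by (simp add: algebra_simps)
qed

lemma exp_int:
  fixes D a lo hi :: real
  assumes "D \<noteq> 0" "lo \<le> hi"
  shows "((\<lambda>t. exp (- (D * (t - a)))) has_integral
          (exp (- (D * (lo - a))) - exp (- (D * (hi - a)))) / D) {lo..hi}"
proof -
  have "((\<lambda>t. exp (- (D * (t - a)))) has_integral
       ((\<lambda>t. - exp (- (D * (t - a))) / D) hi - (\<lambda>t. - exp (- (D * (t - a))) / D) lo)) {lo..hi}"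
  proof (rule fundamental_theorem_of_calculus[OF assms(2)])
    fix x assume "x \<in> {lo..hi}"
    have "((\<lambda>t. - exp (- (D * (t - a))) / D) has_real_derivative
           (- (exp (- (D * (x - a))) * (- (D * (1 - 0)))) / D)) (at x within {lo..hi})"
      using assms by (intro derivative_eq_intros) auto
    then show "((\<lambda>t. - exp (- (D * (t - a))) / D) has_vector_derivative exp (- (D * (x - a))))
         (at x within {lo..hi})"
      using assms by (simp add: has_real_derivative_iff_has_vector_derivative[symmetric])
  qed
  then show ?thesis by (simp add: diff_divide_distrib)
qed

lemma C_eq:
  assumes "0 < a" "a < 1"
  shows "exp (- omega k b c a) = exp (k * a) * a powr (b - 1) * (1 - a) powr (c - 1)"
  using assms unfolding omega_def powr_def
  by (simp add: exp_add[symmetric] algebra_simps)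

lemma om_cont:
  assumes "0 < lo" "hi < 1"
  shows "continuous_on {lo..hi} (\<lambda>t. exp (- omega k b c t))"
proof -
  have "continuous_on {lo..hi} (omega k b c)"
    using assms by (auto intro!: continuous_at_imp_continuous_on DERIV_isCont[OF om_deriv])
  then show ?thesis by (intro continuous_intros)
qed

lemma upper_gen:
  fixes f g :: "real \<Rightarrow> real"
  assumes "(g has_integral I) {lo..hi}" "I \<le> B" "0 \<le> B" "negligible S"
    "\<And>t. t \<in> {lo..hi} - S \<Longrightarrow> f t \<le> g t" "\<And>t. t \<in> S \<Longrightarrow> 0 \<le> g t"
  shows "integral {lo..hi} f \<le> B"
proof -
  define f' where "f' = (\<lambda>t. if t \<in> S then 0 else f t)"
  have eq: "integral {lo..hi} f = integral {lo..hi} f'"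
    using assms(4) by (rule integral_spike) (auto simp: f'_def)
  show ?thesis
  proof (cases "f' integrable_on {lo..hi}")
    case True
    have "integral {lo..hi} f' \<le> integral {lo..hi} g"
      using True assms by (intro integral_le) (auto simp: f'_def)
    also have "\<dots> = I" using assms(1) by (rule integral_unique)
    finally show ?thesis using eq assms by linarith
  next
    case False
    then show ?thesis using eq assms by (simp add: not_integrable_integral)
  qed
qed

theorem lemma4:
  fixes m a M k b c :: real
  assumes "0 \<le> m" "m < a" "a < M" "M \<le> 1" "k \<ge> 0" "b > 1" "c > 1"
  shows
   "(deriv (omega k b c) a > 0 \<longrightarrow>
      integral {a..M} (\<lambda>t. exp (- omega k b c t))
        \<le> exp (k * a) * a powr (b - 1) * (1 - a) powr (c - 1) / deriv (omega k b c) a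
    \<and> integral {a..M} (\<lambda>t. exp (- omega k b c t))
        \<ge> (if M < 1 then exp (k * a) * a powr (b - 1) * (1 - a) powr (c - 1) / deriv (omega k b c) M
              * (1 - exp (- (M - a) * deriv (omega k b c) a))
           else 0))
  \<and> (deriv (omega k b c) a < 0 \<longrightarrow>
      integral {m..a} (\<lambda>t. exp (- omega k b c t))
        \<le> exp (k * a) * a powr (b - 1) * (1 - a) powr (c - 1) / (- deriv (omega k b c) a)
    \<and> integral {m..a} (\<lambda>t. exp (- omega k b c t))
        \<ge> (if 0 < m then exp (k * a) * a powr (b - 1) * (1 - a) powr (c - 1) / (- deriv (omega k b c) m)
              * (1 - exp ((a - m) * deriv (omega k b c) a))
           else 0))"
proof -
  let ?f = "\<lambda>t. exp (- omega k b c t)"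
  define C where "C = exp (- omega k b c a)"
  have a0: "0 < a" "a < 1" using assms by auto
  have Ceq: "exp (k * a) * a powr (b - 1) * (1 - a) powr (c - 1) = C"
    unfolding C_def using C_eq[OF a0] by simp
  have Cpos: "C > 0" unfolding C_def by simp
  define D where "D = wd k b c a"
  have dA: "deriv (omega k b c) a = D" unfolding D_def using om_deriv_eq a0 by blast
  have tang: "?f t \<le> C * exp (- (D * (t - a)))" if "0 < t" "t < 1" for t
  proof -
    have "omega k b c t \<ge> omega k b c a + D * (t - a)"
      unfolding D_def using om_tangent[of a t b c k] a0 that assms by auto
    then have "?f t \<le> exp (- (omega k b c a + D * (t - a)))" by simp
    also have "\<dots> = C * exp (- (D * (t - a)))" unfolding C_def by (simp add: exp_add[symmetric])
    finally show ?thesis .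
  qed
  have fnn: "0 \<le> integral S ?f" for S :: "real set"
    by (cases "?f integrable_on S") (auto intro: integral_nonneg simp: not_integrable_integral)
  have P1: "D > 0 \<longrightarrow> integral {a..M} ?f \<le> C / D \<and>
     integral {a..M} ?f \<ge> (if M < 1 then C / deriv (omega k b c) M * (1 - exp (- (M - a) * D)) else 0)"
  proof
    assume Dp: "D > 0"
    have up: "integral {a..M} ?f \<le> C / D"
    proof (rule upper_gen[where S="{1}"])
      show "((\<lambda>t. C * exp (- (D * (t - a)))) has_integral
            C * ((exp (- (D * (a - a))) - exp (- (D * (M - a)))) / D)) {a..M}"
        using Dp assms by (intro has_integral_mult_right exp_int) auto
      show "C * ((exp (- (D * (a - a))) - exp (- (D * (M - a)))) / D) \<le> C / D"
        using Dp Cpos by (simp add: divide_right_mono mult_left_mono)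
    qed (use Dp Cpos a0 assms tang in auto)
    moreover have "integral {a..M} ?f \<ge> C / deriv (omega k b c) M * (1 - exp (- (M - a) * D))"
      if M1: "M < 1"
    proof -
      define W where "W = wd k b c M"
      have dM: "deriv (omega k b c) M = W" unfolding W_def using om_deriv_eq a0 assms M1 by auto
      have DW: "D \<le> W" unfolding D_def W_def by (rule wd_mono) (use assms a0 M1 in auto)
      have int: "((\<lambda>t. C * exp (- (W * (t - a)))) has_integral
            C * ((exp (- (W * (a - a))) - exp (- (W * (M - a)))) / W)) {a..M}"
        using Dp DW assms by (intro has_integral_mult_right exp_int; linarith)
      have "C * ((exp (- (W * (a - a))) - exp (- (W * (M - a)))) / W)
            = integral {a..M} (\<lambda>t. C * exp (- (W * (t - a))))"
        using int by (rule integral_unique[symmetric])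
      also have "\<dots> \<le> integral {a..M} ?f"
      proof (rule integral_le)
        show "(\<lambda>t. C * exp (- (W * (t - a)))) integrable_on {a..M}" using int by blast
        show "?f integrable_on {a..M}"
          using om_cont[of a M k b c] a0 M1 integrable_continuous_interval by blast
        fix t assume t: "t \<in> {a..M}"
        have "omega k b c t - omega k b c a \<le> wd k b c t * (t - a)"
          using om_bounds(1)[of a t b c k] t a0 M1 assms by auto
        also have "\<dots> \<le> W * (t - a)"
          unfolding W_def using t a0 M1 assms by (intro mult_right_mono wd_mono) auto
        finally have "- (W * (t - a)) - omega k b c a \<le> - omega k b c t" by simp
        then have "exp (- (W * (t - a)) - omega k b c a) \<le> ?f t" by simp
        moreover have "C * exp (- (W * (t - a))) = exp (- omega k b c a + - (W * (t - a)))"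
          unfolding C_def by (rule mult_exp_exp)
        moreover have "- omega k b c a + - (W * (t - a)) = - (W * (t - a)) - omega k b c a" by simp
        ultimately show "C * exp (- (W * (t - a))) \<le> ?f t" by metis
      qed
      finally have L: "C * ((1 - exp (- (W * (M - a)))) / W) \<le> integral {a..M} ?f" by simp
      have "D * (M - a) \<le> W * (M - a)" using DW assms by (intro mult_right_mono) auto
      then have "exp (- (W * (M - a))) \<le> exp (- (M - a) * D)"
        by (simp add: algebra_simps)
      then have "C / W * (1 - exp (- (M - a) * D)) \<le> C * ((1 - exp (- (W * (M - a)))) / W)"
        using Cpos Dp DW by (simp add: divide_right_mono mult_left_mono field_simps)
      then show ?thesis using L dM by simp
    qed
    ultimately show "integral {a..M} ?f \<le> C / D \<and>
     integral {a..M} ?f \<ge> (if M < 1 then C / deriv (omega k b c) M * (1 - exp (- (M - a) * D)) else 0)"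
      using fnn by auto
  qed
  have P2: "D < 0 \<longrightarrow> integral {m..a} ?f \<le> C / (- D) \<and>
     integral {m..a} ?f \<ge> (if 0 < m then C / (- deriv (omega k b c) m) * (1 - exp ((a - m) * D)) else 0)"
  proof
    assume Dn: "D < 0"
    have up: "integral {m..a} ?f \<le> C / (- D)"
    proof (rule upper_gen[where S="{0}"])
      show "((\<lambda>t. C * exp (- (D * (t - a)))) has_integral
            C * ((exp (- (D * (m - a))) - exp (- (D * (a - a)))) / D)) {m..a}"
        using Dn assms by (intro has_integral_mult_right exp_int) auto
      have "C * ((exp (- (D * (m - a))) - exp (- (D * (a - a)))) / D)
          = C * ((1 - exp (- (D * (m - a)))) / (- D))" using Dn by (simp add: field_simps)
      also have "\<dots> \<le> C / (- D)"
      proof -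
        have "C * (1 - exp (- (D * (m - a)))) \<le> C" using Cpos by simp
        then have "C * (1 - exp (- (D * (m - a)))) / (- D) \<le> C / (- D)"
          using Dn by (intro divide_right_mono) auto
        then show ?thesis by simp
      qed
      finally show "C * ((exp (- (D * (m - a))) - exp (- (D * (a - a)))) / D) \<le> C / (- D)" .
    next
      show "0 \<le> C / (- D)" using Dn Cpos by (intro divide_nonneg_pos) auto
    qed (use Dn Cpos a0 assms tang in auto)
    moreover have "integral {m..a} ?f \<ge> C / (- deriv (omega k b c) m) * (1 - exp ((a - m) * D))"
      if m0: "0 < m"
    proof -
      define W where "W = wd k b c m"
      have dm: "deriv (omega k b c) m = W" unfolding W_def using om_deriv_eq a0 assms m0 by auto
      have DW: "W \<le> D" unfolding D_def W_def by (rule wd_mono) (use assms a0 m0 in auto)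
      have int: "((\<lambda>t. C * exp (- (W * (t - a)))) has_integral
            C * ((exp (- (W * (m - a))) - exp (- (W * (a - a)))) / W)) {m..a}"
        using Dn DW assms by (intro has_integral_mult_right exp_int) auto
      have "C * ((exp (- (W * (m - a))) - exp (- (W * (a - a)))) / W)
            = integral {m..a} (\<lambda>t. C * exp (- (W * (t - a))))"
        using int by (rule integral_unique[symmetric])
      also have "\<dots> \<le> integral {m..a} ?f"
      proof (rule integral_le)
        show "(\<lambda>t. C * exp (- (W * (t - a)))) integrable_on {m..a}" using int by blast
        show "?f integrable_on {m..a}"
          using om_cont[of m a k b c] a0 m0 integrable_continuous_interval by blast
        fix t assume t: "t \<in> {m..a}"
        have "omega k b c a - omega k b c t \<ge> wd k b c t * (a - t)"
          using om_bounds(2)[of t a b c k] t a0 m0 assms by auto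
        moreover have "W * (a - t) \<le> wd k b c t * (a - t)"
          unfolding W_def using t a0 m0 assms by (intro mult_right_mono wd_mono) auto
        ultimately have "- (W * (t - a)) - omega k b c a \<le> - omega k b c t" by (simp add: algebra_simps)
        then have "exp (- (W * (t - a)) - omega k b c a) \<le> ?f t" by simp
        moreover have "C * exp (- (W * (t - a))) = exp (- omega k b c a + - (W * (t - a)))"
          unfolding C_def by (rule mult_exp_exp)
        moreover have "- omega k b c a + - (W * (t - a)) = - (W * (t - a)) - omega k b c a" by simp
        ultimately show "C * exp (- (W * (t - a))) \<le> ?f t" by metis
      qed
      finally have L: "C * ((exp (- (W * (m - a))) - 1) / W) \<le> integral {m..a} ?f" by simp
      have "exp (W * (a - m)) \<le> exp ((a - m) * D)"
        using DW assms by (simp add: mult_right_mono mult.commute)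
      then have "C / (- W) * (1 - exp ((a - m) * D)) \<le> C * ((exp (- (W * (m - a))) - 1) / W)"
        using Cpos Dn DW by (simp add: divide_right_mono mult_left_mono field_simps)
      then show ?thesis using L dm by simp
    qed
    ultimately show "integral {m..a} ?f \<le> C / (- D) \<and>
     integral {m..a} ?f \<ge> (if 0 < m then C / (- deriv (omega k b c) m) * (1 - exp ((a - m) * D)) else 0)"
      using fnn by auto
  qed
  show ?thesis unfolding Ceq dA using P1 P2 by blast
qed

end
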